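(* Let $X=\bigcup_{n\ge1}X_n$ be a positively graded set. The space $K[\mathcal K_\infty,X]=\bigoplus_{n\ge1}K[\mathcal K_{n,X}]$ with the operations $\bullet_i$ described in the context is a preshuffle algebra, and it is the free preshuffle algebra on $X$: for every preshuffle algebra $A$ and every map $\varphi:X\to A$ with $\varphi(X_n)\subseteq A_n$, there is a unique degree-preserving linear map $\Phi:K[\mathcal K_\infty,X]\to A$ with $\Phi(u\bullet_iv)=\Phi(u)\bullet_i\Phi(v)$ for all $u,v,i$ and $\Phi(\xi_n;x)=\varphi(x)$ for $x\in X_n$.
   Context: A preshuffle algebra is a graded vector space $A=\bigoplus_{n\ge0}A_n$ over a field $K$ with linear maps $\bullet_i:A_n\otimes A_m\to A_{n+m}$ for all $n,m\ge0$ and $0\le i\le m$, such that $(x\bullet_iy)\bullet_jz=x\bullet_{i+j}(y\bullet_jz)$ for all homogeneous $x,y,z$, $0\le i\le|y|$, $0\le j\le|z|$ ($|\cdot|$ denotes degree). $\mathcal K_n$ is the set of surjective maps $f:\{1,\dots,n\}\to\{1,\dots,r\}$ ($1\le r\le n$), written $(f(1),\dots,f(n))$, such that whenever $f(i)=f(j)$ with $i<j$, one has $f(k)\le f(i)$ for all $i\le k\le j$. $\mathcal K_{n,X}$ is the set of tuples $(f;x_1,\dots,x_r)$ with $f\in\mathcal K_n$ having image $\{1..r\}$ and $x_l\in X_{|f^{-1}(l)|}$; it has degree $n$. For $(f;x_1,\dots,x_r)\in\mathcal K_{n,X}$, $(g;y_1,\dots,y_k)\in\mathcal K_{m,X}$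 and $0\le i\le m$: $(f;x_1..x_r)\bullet_i(g;y_1..y_k)=((g(1)+r,\dots,g(i)+r,f(1),\dots,f(n),g(i+1)+r,\dots,g(m)+r);x_1,\dots,x_r,y_1,\dots,y_k)$. $\xi_n$ denotes the constant map $\{1,\dots,n\}\to\{1\}$. *)

theory Defs
  imports Main "HOL-Library.Function_Algebras"
begin

text \<open>(The first four conjuncts are the vector space axioms, i.e. the
  assumptions of the library locale vector_space.)  A graded vector space over the field 'k is given inside an ambient
  vector space (type 'a with scalar multiplication scale) by a family of
  subspaces G n (the homogeneous components A_n); the space itself is the
  internal direct sum of the G n, i.e. the set of finite sums of homogeneous
  elements, and the sum is required to be direct.\<close>

definition gcarrier :: "(nat \<Rightarrow> 'a::ab_group_add set) \<Rightarrow> 'a set" where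
  "gcarrier G = {(\<Sum>n\<in>S. c n) | S c. finite S \<and> (\<forall>n\<in>S. c n \<in> G n)}"

definition graded_vs ::
  "('k::field \<Rightarrow> 'a::ab_group_add \<Rightarrow> 'a) \<Rightarrow> (nat \<Rightarrow> 'a set) \<Rightarrow> bool" where
  "graded_vs scale G \<longleftrightarrow>
     (\<forall>a x y. scale a (x + y) = scale a x + scale a y) \<and>
     (\<forall>a b x. scale (a + b) x = scale a x + scale b x) \<and>
     (\<forall>a b x. scale a (scale b x) = scale (a * b) x) \<and>
     (\<forall>x. scale 1 x = x) \<and>
     (\<forall>n. 0 \<in> G n \<and> (\<forall>x\<in>G n. \<forall>y\<in>G n. x + y \<in> G n) \<and>
            (\<forall>c. \<forall>x\<in>G n. scale c x \<in> G n)) \<and>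
     (\<forall>S c d. finite S \<and> (\<forall>n\<in>S. c n \<in> G n \<and> d n \<in> G n) \<and>
        (\<Sum>n\<in>S. c n) = (\<Sum>n\<in>S. d n) \<longrightarrow> (\<forall>n\<in>S. c n = d n))"

text \<open>bul i x y stands for x \<bullet>_i y; it is only required to be meaningful
  for homogeneous x of degree n, y of degree m and i \<le> m.\<close>

definition preshuffle_algebra ::
  "('k::field \<Rightarrow> 'a::ab_group_add \<Rightarrow> 'a) \<Rightarrow> (nat \<Rightarrow> 'a set) \<Rightarrow> (nat \<Rightarrow> 'a \<Rightarrow> 'a \<Rightarrow> 'a) \<Rightarrow> bool" where
  "preshuffle_algebra scale G bul \<longleftrightarrow>
     graded_vs scale G \<and>
     (\<forall>n m i x y. x \<in> G n \<longrightarrow> y \<in> G m \<longrightarrow> i \<le> m \<longrightarrow> bul i x y \<in> G (n + m)) \<and>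
     (\<forall>n m i x x' y. x \<in> G n \<longrightarrow> x' \<in> G n \<longrightarrow> y \<in> G m \<longrightarrow> i \<le> m \<longrightarrow>
        bul i (x + x') y = bul i x y + bul i x' y) \<and>
     (\<forall>n m i x y y'. x \<in> G n \<longrightarrow> y \<in> G m \<longrightarrow> y' \<in> G m \<longrightarrow> i \<le> m \<longrightarrow>
        bul i x (y + y') = bul i x y + bul i x y') \<and>
     (\<forall>n m i c x y. x \<in> G n \<longrightarrow> y \<in> G m \<longrightarrow> i \<le> m \<longrightarrow>
        bul i (scale c x) y = scale c (bul i x y) \<and> bul i x (scale c y) = scale c (bul i x y)) \<and>
     (\<forall>n m p i j x y z. x \<in> G n \<longrightarrow> y \<in> G m \<longrightarrow> z \<in> G p \<longrightarrow> i \<le> m \<longrightarrow> j \<le> p \<longrightarrow>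
        bul j (bul i x y) z = bul (i + j) x (bul j y z))"

text \<open>A map f : {1..n} \<rightarrow> {1..r} is the list [f(1),...,f(n)] (0-indexed list
  positions k correspond to arguments k+1).\<close>

definition in_K :: "nat \<Rightarrow> nat \<Rightarrow> nat list \<Rightarrow> bool" where
  "in_K n r f \<longleftrightarrow> length f = n \<and> 1 \<le> r \<and> r \<le> n \<and> set f = {1..r} \<and>
     (\<forall>i j k. i < j \<and> j < n \<and> f ! i = f ! j \<and> i \<le> k \<and> k \<le> j \<longrightarrow> f ! k \<le> f ! i)"

text \<open>Elements of K_{n,X}: pairs (f, [x_1,...,x_r]) with x_l \<in> X of degree
  |f^{-1}(l)|.  The set X is graded by dX (X_n = {x\<in>X. dX x = n}).\<close>

definition KX :: "'x set \<Rightarrow> ('x \<Rightarrow> nat) \<Rightarrow> nat \<Rightarrow> (nat list \<times> 'x list) set" where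
  "KX X dX n = {(f, xs). in_K n (length xs) f \<and>
      (\<forall>l < length xs. xs ! l \<in> X \<and> dX (xs ! l) = length (filter (\<lambda>v. v = Suc l) f))}"

definition bbul :: "nat \<Rightarrow> nat list \<times> 'x list \<Rightarrow> nat list \<times> 'x list \<Rightarrow> nat list \<times> 'x list" where
  "bbul i a b = (let (f, xs) = a; (g, ys) = b; r = length xs in
     (map (\<lambda>v. v + r) (take i g) @ f @ map (\<lambda>v. v + r) (drop i g), xs @ ys))"

text \<open>The free vector space K[B] is realised as finitely supported functions
  B \<Rightarrow> 'k with pointwise operations.\<close>

definition fscale :: "'k::field \<Rightarrow> ('b \<Rightarrow> 'k) \<Rightarrow> ('b \<Rightarrow> 'k)" where
  "fscale c u = (\<lambda>b. c * u b)"

text \<open>Homogeneous component of degree n of K[K_\<infinity>,X] = \<Oplus>_{n\<ge>1} K[K_{n,X}]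
  (empty basis, hence zero, for n = 0).\<close>

definition FG :: "'x set \<Rightarrow> ('x \<Rightarrow> nat) \<Rightarrow> nat \<Rightarrow> (nat list \<times> 'x list \<Rightarrow> 'k::field) set" where
  "FG X dX n = {u. finite {b. u b \<noteq> 0} \<and> (\<forall>b. u b \<noteq> 0 \<longrightarrow> b \<in> KX X dX n)}"

definition fbul :: "nat \<Rightarrow> (nat list \<times> 'x list \<Rightarrow> 'k::field) \<Rightarrow> (nat list \<times> 'x list \<Rightarrow> 'k)
    \<Rightarrow> (nat list \<times> 'x list \<Rightarrow> 'k)" where
  "fbul i u v = (\<lambda>b. \<Sum>(a, c)\<in>{(a, c). u a \<noteq> 0 \<and> v c \<noteq> 0 \<and> bbul i a c = b}. u a * v c)"

definition gen :: "('x \<Rightarrow> nat) \<Rightarrow> 'x \<Rightarrow> (nat list \<times> 'x list \<Rightarrow> 'k::field)" where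
  "gen dX x = (\<lambda>b. if b = (replicate (dX x) 1, [x]) then 1 else 0)"

definition free_hom ::
  "'x set \<Rightarrow> ('x \<Rightarrow> nat) \<Rightarrow> ('k::field \<Rightarrow> 'a::ab_group_add \<Rightarrow> 'a) \<Rightarrow> (nat \<Rightarrow> 'a set)
    \<Rightarrow> (nat \<Rightarrow> 'a \<Rightarrow> 'a \<Rightarrow> 'a) \<Rightarrow> ('x \<Rightarrow> 'a) \<Rightarrow> ((nat list \<times> 'x list \<Rightarrow> 'k) \<Rightarrow> 'a) \<Rightarrow> bool" where
  "free_hom X dX scale G bul phi Phi \<longleftrightarrow>
     (\<forall>n. \<forall>u\<in>FG X dX n. Phi u \<in> G n) \<and>
     (\<forall>u\<in>gcarrier (FG X dX). \<forall>v\<in>gcarrier (FG X dX). Phi (u + v) = Phi u + Phi v) \<and>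
     (\<forall>c. \<forall>u\<in>gcarrier (FG X dX). Phi (fscale c u) = scale c (Phi u)) \<and>
     (\<forall>n m i u v. u \<in> FG X dX n \<longrightarrow> v \<in> FG X dX m \<longrightarrow> i \<le> m \<longrightarrow>
        Phi (fbul i u v) = bul i (Phi u) (Phi v)) \<and>
     (\<forall>x\<in>X. Phi (gen dX x) = phi x)"

end

theory Submission
  imports Defs
begin


lemma bbul_simp: "bbul i (f, xs) (g, ys) = (map (\<lambda>v. v + length xs) (take i g) @ f @ map (\<lambda>v. v + length xs) (drop i g), xs @ ys)"
  by (simp add: bbul_def Let_def)

lemma bbul_assoc:
  assumes "i \<le> length (fst b)" "j \<le> length (fst c)"
  shows "bbul j (bbul i a b) c = bbul (i + j) a (bbul j b c)"
proof -
  obtain f xs where a: "a = (f, xs)" by (cases a)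
  obtain g ys where b: "b = (g, ys)" by (cases b)
  obtain h zs where c: "c = (h, zs)" by (cases c)
  show ?thesis using assms
    by (simp add: a b c bbul_simp take_append drop_append map_map o_def ac_simps min_def)
qed

lemma bbul_KX:
  assumes a: "a \<in> KX X dX n" and c: "c \<in> KX X dX m" and i: "i \<le> m"
  shows "bbul i a c \<in> KX X dX (n+m)"
proof -
  obtain f xs where ad: "a = (f, xs)" by (cases a)
  obtain g ys where cd: "c = (g,ys)" by (cases c)
  define r where "r = length xs"
  define k where "k = length ys"
  define h where "h = map (\<lambda>v. v + r) (take i g) @ f @ map (\<lambda>v. v + r) (drop i g)"
  have b: "bbul i a c = (h, xs @ ys)" by (simp add: bbul_simp ad cd h_def r_def)
  from a have fK: "in_K n r f" and fX: "\<forall>l<r. xs!l \<in> X \<and> dX (xs!l) = length (filter (\<lambda>v. v = Suc l) f)"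
    by (auto simp: KX_def ad r_def)
  from c have gK: "in_K m k g" and gX: "\<forall>l<k. ys!l \<in> X \<and> dX (ys!l) = length (filter (\<lambda>v. v = Suc l) g)"
    by (auto simp: KX_def cd k_def)
  have lf: "length f = n" and r1: "1 \<le> r" "r \<le> n" and sf: "set f = {1..r}"
    and fc: "\<forall>p q t. p < q \<and> q < n \<and> f ! p = f ! q \<and> p \<le> t \<and> t \<le> q \<longrightarrow> f ! t \<le> f ! p"
    using fK by (auto simp: in_K_def)
  have lg: "length g = m" and k1: "1 \<le> k" "k \<le> m" and sg: "set g = {1..k}"
    and gc: "\<forall>p q t. p < q \<and> q < m \<and> g ! p = g ! q \<and> p \<le> t \<and> t \<le> q \<longrightarrow> g ! t \<le> g ! p"
    using gK by (auto simp: in_K_def)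
  have lh: "length h = n + m" using lf lg i by (simp add: h_def)
  have hn: "h!t = (if t < i then g!t + r else if t < i+n then f!(t-i) else g!(t-n)+r)" if "t < n+m" for t
    using that lf lg i by (auto simp: h_def nth_append)
  have fr: "1 \<le> f!s \<and> f!s \<le> r" if "s < n" for s
    using nth_mem[of s f] that lf sf by auto
  have gr: "1 \<le> g!s \<and> g!s \<le> k" if "s < m" for s
    using nth_mem[of s g] that lg sg by auto
  have sh: "set h = {1..r+k}"
  proof -
    have "set (take i g) \<union> set (drop i g) = set g"
      by (metis append_take_drop_id set_append)
    then have "set h = (\<lambda>v. v + r) ` set g \<union> set f"
      by (auto simp: h_def)
    also have "\<dots> = {1..r+k}" using sf sg
      by (auto simp: image_iff)
    finally show ?thesis .
  qed
  have pat: "h ! t \<le> h ! p" if "p < q" "q < n+m" "h ! p = h ! q" "p \<le> t" "t \<le> q" for p q t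
  proof -
    define gi where "gi s = (if s < i then s else s - n)" for s
    show ?thesis
    proof (cases "i \<le> p \<and> p < i + n")
      case True
      then have hp: "h!p = f!(p-i)" using hn[of p] that by auto
      have "q < i + n"
      proof (rule ccontr)
        assume "\<not> q < i + n"
        then have "h!q = g!(q-n) + r" using hn[of q] that by auto
        moreover have "f!(p-i) \<le> r" using fr[of "p-i"] True by auto
        moreover have "1 \<le> g!(q-n)" using gr[of "q-n"] that \<open>\<not> q < i + n\<close> by auto
        ultimately show False using that hp by auto
      qed
      then have "h!q = f!(q-i)" "h!t = f!(t-i)" using hn[of q] hn[of t] that True by auto
      moreover have "p-i < q-i" "q-i<n" "p-i \<le> t-i" "t-i \<le> q-i" using that True \<open>q < i+n\<close> by arith+
      ultimately show ?thesis using fc[rule_format, of "p-i" "q-i" "t-i"] that hp by auto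
    next
      case False
      then have hp: "h!p = g!(gi p) + r" "gi p < m" using hn[of p] that i by (auto simp: gi_def)
      have gp: "1 \<le> g!(gi p)" using gr[of "gi p"] hp by auto
      have qg: "\<not> (i \<le> q \<and> q < i + n)"
      proof
        assume "i \<le> q \<and> q < i + n"
        then have "h!q = f!(q-i)" using hn[of q] that by auto
        moreover have "f!(q-i) \<le> r" using fr[of "q-i"] \<open>i \<le> q \<and> q < i + n\<close> by auto
        ultimately show False using that hp gp by auto
      qed
      then have hq: "h!q = g!(gi q) + r" "gi q < m" using hn[of q] that i by (auto simp: gi_def)
      show ?thesis
      proof (cases "i \<le> t \<and> t < i + n")
        case True
        then have "h!t = f!(t-i)" using hn[of t] that by auto
        moreover have "t - i < n" using True by arith
        ultimately show ?thesis using fr[of "t-i"] hp by auto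
      next
        case False
        then have ht: "h!t = g!(gi t) + r" using hn[of t] that by (auto simp: gi_def)
        have "gi p < gi q" "gi p \<le> gi t" "gi t \<le> gi q" using that False qg \<open>\<not> (i \<le> p \<and> p < i + n)\<close>
          by (auto simp: gi_def)
        then have "g!(gi t) \<le> g!(gi p)" using gc[rule_format, of "gi p" "gi q" "gi t"] hp hq that by auto
        then show ?thesis using ht hp by auto
      qed
    qed
  qed
  have inK: "in_K (n+m) (r+k) h"
    unfolding in_K_def using lh r1 k1 sh pat by auto
  have deg: "(xs@ys)!l \<in> X \<and> dX ((xs@ys)!l) = length (filter (\<lambda>v. v = Suc l) h)" if "l < r + k" for l
  proof (cases "l < r")
    case True
    have z: "filter (\<lambda>v. v = Suc l) (map (\<lambda>v. v + r) L) = []" if "set L \<subseteq> set g" for L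
      using that sg True by (auto simp: filter_empty_conv)
    have "set (take i g) \<subseteq> set g" "set (drop i g) \<subseteq> set g" by (auto dest: in_set_takeD in_set_dropD)
    then have "length (filter (\<lambda>v. v = Suc l) h) = length (filter (\<lambda>v. v = Suc l) f)"
      using z by (simp add: h_def)
    then show ?thesis using fX True by (simp add: nth_append r_def)
  next
    case False
    have z: "filter (\<lambda>v. v = Suc l) f = []" using sf False by (auto simp: filter_empty_conv)
    have e: "(\<lambda>v. v + r = Suc l) = (\<lambda>v. v = Suc (l - r))" using False by auto
    have "length (filter (\<lambda>v. v = Suc l) h) =
       length (filter (\<lambda>v. v = Suc (l-r)) (take i g)) + length (filter (\<lambda>v. v = Suc (l-r)) (drop i g))"
      by (simp add: h_def z filter_map o_def e)
    also have "\<dots> = length (filter (\<lambda>v. v = Suc (l-r)) g)"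
      by (metis append_take_drop_id filter_append length_append)
    finally show ?thesis using gX[rule_format, of "l-r"] False that by (simp add: nth_append r_def k_def)
  qed
  show ?thesis unfolding b KX_def using inK deg by (auto simp: r_def k_def)
qed



lemma map_pred_suc: "0 \<notin> set L \<Longrightarrow> map (\<lambda>v. v - 1 + 1) L = (L::nat list)"
  by (induction L) auto

lemma KX_single:
  assumes "(f, [x]) \<in> KX X dX n"
  shows "f = replicate n 1 \<and> dX x = n \<and> x \<in> X"
proof -
  have l: "length f = n" and s: "set f = {1}" and d: "dX x = length (filter (\<lambda>v. v = 1) f)" and x: "x \<in> X"
    using assms by (auto simp: KX_def in_K_def)
  have f: "f = replicate n 1" using l s by (metis replicate_eqI singletonD)
  then show ?thesis using d x by simp
qed

lemma KX_decomp:
  assumes a: "(f, x # xs) \<in> KX X dX n" and ne: "xs \<noteq> []"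
  shows "\<exists>j f'. (f, x#xs) = bbul j (replicate (dX x) 1, [x]) (f', xs) \<and> (f', xs) \<in> KX X dX (n - dX x)
     \<and> j \<le> n - dX x \<and> x \<in> X \<and> 1 \<le> dX x \<and> dX x \<le> n"
proof -
  define r where "r = length (x#xs)"
  have r2: "2 \<le> r" using ne by (cases xs) (auto simp: r_def)
  from a have fK: "in_K n r f" and fX: "\<forall>l<r. (x#xs)!l \<in> X \<and> dX ((x#xs)!l) = length (filter (\<lambda>v. v = Suc l) f)"
    unfolding KX_def r_def by auto
  have lf: "length f = n" and sf: "set f = {1..r}"
    and fc: "\<forall>p q t. p < q \<and> q < n \<and> f ! p = f ! q \<and> p \<le> t \<and> t \<le> q \<longrightarrow> f ! t \<le> f ! p"
    using fK by (auto simp: in_K_def)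
  define P where "P = takeWhile (\<lambda>v. v \<noteq> 1) f"
  define R where "R = dropWhile (\<lambda>v. v \<noteq> 1) f"
  define Om where "Om = takeWhile (\<lambda>v. v = 1) R"
  define S where "S = dropWhile (\<lambda>v. v = 1) R"
  have fPOS: "f = P @ Om @ S" by (simp add: P_def R_def Om_def S_def)
  have P1: "1 \<notin> set P" by (auto simp: P_def dest: set_takeWhileD)
  define d where "d = length Om"
  have Om1: "Om = replicate d 1"
    by (rule replicate_eqI) (auto simp: Om_def d_def dest: set_takeWhileD)
  have "1 \<in> set f" using sf r2 by auto
  then have Rn: "R \<noteq> []" by (auto simp: R_def dropWhile_eq_Nil_conv)
  then have "hd R = 1" using hd_dropWhile[of "\<lambda>v. v \<noteq> 1" f] by (simp add: R_def)
  then have Omn: "Om \<noteq> []" using Rn unfolding Om_def by (cases R) auto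
  then have d1: "1 \<le> d" by (cases Om) (auto simp: d_def)
  have S1: "1 \<notin> set S"
  proof
    assume "1 \<in> set S"
    then obtain s where s: "s < length S" "S!s = 1" by (metis in_set_conv_nth)
    have "S \<noteq> []" using s by auto
    then have S0: "S!0 \<noteq> 1" using hd_dropWhile[of "\<lambda>v. v = 1" R] by (simp add: S_def hd_conv_nth)
    define p where "p = length P"
    define t where "t = length P + length Om"
    define q where "q = t + s"
    have fp: "f!p = 1" using d1 by (simp add: fPOS Om1 p_def nth_append)
    have ft: "f!t = S!0" using s by (simp add: fPOS t_def nth_append)
    have fq: "f!q = 1" using s by (simp add: fPOS q_def t_def nth_append)
    have qn: "q < n" using s lf by (simp add: fPOS q_def t_def)
    have "p < q" "p \<le> t" "t \<le> q" using d1 Om1 by (auto simp: p_def q_def t_def)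
    then have "f!t \<le> f!p" using fc[rule_format, of p q t] fp fq qn by auto
    moreover have "t < n" using qn by (simp add: q_def)
    then have "f!t \<in> {1..r}" using sf lf by (metis nth_mem)
    ultimately show False using ft S0 fp by auto
  qed
  have dd: "dX x = d"
  proof -
    have "dX x = length (filter (\<lambda>v. v = 1) f)" using fX[rule_format, of 0] r2 by simp
    also have "\<dots> = d" using P1 S1 unfolding fPOS Om1
      by (simp add: filter_empty_conv, metis (mono_tags) filter_empty_conv length_0_conv)
    finally show ?thesis .
  qed
  have f0: "0 \<notin> set f" using sf by auto
  have P0: "0 \<notin> set P" and S0: "0 \<notin> set S" using f0 unfolding fPOS by auto
  have sPS: "set P \<union> set S = {2..r}"
  proof -
    have "set P \<union> {1} \<union> set S = {1..r}" using sf d1 unfolding fPOS Om1 by auto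
    then have "set P \<union> set S = {1..r} - {1}" using P1 S1 by blast
    also have "{1..r} - {1} = {2..r}" by auto
    finally show ?thesis .
  qed
  define Q where "Q = P @ S"
  define f' where "f' = map (\<lambda>v. v - 1) Q"
  define j where "j = length P"
  have lQ: "length Q = n - d" using lf unfolding fPOS Om1 Q_def by simp
  have lf': "length f' = n - d" using lQ by (simp add: f'_def)
  have Pid: "map (\<lambda>v. v - 1 + 1) P = P" using P0 by (rule map_pred_suc)
  have Sid: "map (\<lambda>v. v - 1 + 1) S = S" using S0 by (rule map_pred_suc)
  have bb: "(f, x#xs) = bbul j (replicate (dX x) 1, [x]) (f', xs)"
    using Pid Sid by (simp add: bbul_simp dd f'_def Q_def j_def map_map o_def fPOS Om1)
  have rx: "length xs = r - 1" by (simp add: r_def)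
  have sf': "set f' = {1..length xs}"
  proof -
    have "set f' = (\<lambda>v. v - 1) ` (set P \<union> set S)" by (simp add: f'_def Q_def image_Un)
    also have "\<dots> = (\<lambda>v. v - 1) ` {2..r}" using sPS by simp
    also have "\<dots> = {1..r-1}"
      by (auto simp: image_iff intro!: bexI[where x="Suc _"])
    finally show ?thesis using rx by simp
  qed
  have Qnth: "Q!t = f!(if t < j then t else t + d)" if "t < length Q" for t
    using that by (auto simp: Q_def fPOS Om1 j_def nth_append)
  have Q2: "2 \<le> Q!t" if "t < length Q" for t
    using nth_mem[OF that] sPS by (auto simp: Q_def)
  have pat: "f'!t \<le> f'!p" if "p < q" "q < n - d" "f'!p = f'!q" "p \<le> t" "t \<le> q" for p q t
  proof -
    define sg where "sg u = (if u < j then u else u + d)" for u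
    have "Q!p = Q!q" using that Q2[of p] Q2[of q] lQ by (simp add: f'_def)
    then have "f!(sg p) = f!(sg q)" using Qnth[of p] Qnth[of q] that lQ by (simp add: sg_def)
    moreover have "sg p < sg q" "sg q < n" "sg p \<le> sg t" "sg t \<le> sg q" using that lf lQ by (auto simp: sg_def)
    ultimately have "f!(sg t) \<le> f!(sg p)" using fc by blast
    then have "Q!t \<le> Q!p" using Qnth[of p] Qnth[of t] that lQ by (simp add: sg_def)
    then show ?thesis using that lQ by (simp add: f'_def)
  qed
  have cardle: "length xs \<le> n - d"
    using card_length[of f'] sf' lf' by simp
  have inK: "in_K (n - d) (length xs) f'"
    unfolding in_K_def using lf' sf' cardle ne pat by (auto simp: Suc_le_eq)
  have deg: "xs!l \<in> X \<and> dX (xs!l) = length (filter (\<lambda>v. v = Suc l) f')" if "l < length xs" for l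
  proof -
    have "(x#xs)!(Suc l) \<in> X \<and> dX ((x#xs)!(Suc l)) = length (filter (\<lambda>v. v = Suc (Suc l)) f)"
      using fX[rule_format, of "Suc l"] that by (simp add: r_def del: nth_Cons_Suc)
    moreover have "length (filter (\<lambda>v. v = Suc (Suc l)) f) = length (filter (\<lambda>v. v = Suc (Suc l)) Q)"
      by (simp add: fPOS Om1 Q_def)
    moreover have "(\<lambda>v. v - 1 = Suc l) = (\<lambda>v::nat. v = Suc (Suc l))" by auto
    ultimately show ?thesis by (simp add: f'_def filter_map o_def)
  qed
  have KX': "(f', xs) \<in> KX X dX (n - dX x)"
    unfolding KX_def using inK deg dd by auto
  have "j \<le> n - dX x" using lQ dd by (simp add: j_def Q_def)
  moreover have "x \<in> X" using fX r2 by (metis nth_Cons_0 zero_less_iff_neq_zero numeral_2_eq_2 Suc_le_eq less_le_trans zero_less_Suc)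
  moreover have "dX x \<le> n" using lf dd unfolding fPOS Om1 by simp
  ultimately show ?thesis using bb KX' dd d1 by blast
qed



definition supp :: "('b \<Rightarrow> 'k::zero) \<Rightarrow> 'b set" where "supp u = {b. u b \<noteq> 0}"

lemma sum_fun_apply: "(\<Sum>n\<in>S. c n) b = (\<Sum>n\<in>S. c n b)"
  by (induction S rule: infinite_finite_induct) auto

lemma collapse2:
  fixes H :: "'a \<Rightarrow> 'b \<Rightarrow> 'c \<Rightarrow> 'd::comm_monoid_add"
  assumes "finite D" "finite A" "finite B" "\<And>a b. a \<in> A \<Longrightarrow> b \<in> B \<Longrightarrow> g a b \<in> D"
  shows "(\<Sum>e\<in>D. \<Sum>a\<in>A. \<Sum>b\<in>B. if g a b = e then H a b e else 0) = (\<Sum>a\<in>A. \<Sum>b\<in>B. H a b (g a b))"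
proof -
  have "(\<Sum>e\<in>D. \<Sum>a\<in>A. \<Sum>b\<in>B. if g a b = e then H a b e else 0) = (\<Sum>a\<in>A. \<Sum>e\<in>D. \<Sum>b\<in>B. if g a b = e then H a b e else 0)"
    by (rule sum.swap)
  also have "\<dots> = (\<Sum>a\<in>A. \<Sum>b\<in>B. \<Sum>e\<in>D. if g a b = e then H a b e else 0)"
    by (rule sum.cong[OF refl], rule sum.swap)
  also have "\<dots> = (\<Sum>a\<in>A. \<Sum>b\<in>B. H a b (g a b))"
    using assms by (auto intro!: sum.cong simp: sum.delta)
  finally show ?thesis .
qed

lemma fbul_eq:
  assumes "finite Au" "finite Av" "supp u \<subseteq> Au" "supp v \<subseteq> Av"
  shows "fbul i u v b = (\<Sum>a\<in>Au. \<Sum>c\<in>Av. if bbul i a c = b then u a * v c else 0)"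
proof -
  let ?T = "{(a, c). u a \<noteq> 0 \<and> v c \<noteq> 0 \<and> bbul i a c = b}"
  have T: "?T \<subseteq> Au \<times> Av" using assms by (auto simp: supp_def)
  have "fbul i u v b = (\<Sum>(a,c)\<in>?T. u a * v c)" by (simp add: fbul_def)
  also have "\<dots> = (\<Sum>(a,c)\<in>Au \<times> Av. if bbul i a c = b then u a * v c else 0)"
    by (rule sum.mono_neutral_cong_left) (use assms T in \<open>auto split: if_splits\<close>)
  also have "\<dots> = (\<Sum>a\<in>Au. \<Sum>c\<in>Av. if bbul i a c = b then u a * v c else 0)"
    by (rule sum.cartesian_product[symmetric])
  finally show ?thesis .
qed

lemma supp_fbul: "supp (fbul i u v) \<subseteq> (\<lambda>(a, c). bbul i a c) ` (supp u \<times> supp v)"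
proof
  fix b assume "b \<in> supp (fbul i u v)"
  then have "fbul i u v b \<noteq> 0" by (simp add: supp_def)
  then have "{(a, c). u a \<noteq> 0 \<and> v c \<noteq> 0 \<and> bbul i a c = b} \<noteq> {}"
    unfolding fbul_def by (metis (no_types, lifting) sum.empty)
  then show "b \<in> (\<lambda>(a, c). bbul i a c) ` (supp u \<times> supp v)" by (force simp: supp_def)
qed

lemma FG_D: "u \<in> FG X dX n \<Longrightarrow> finite (supp u) \<and> supp u \<subseteq> KX X dX n"
  by (auto simp: FG_def supp_def)

lemma FG_I: "finite (supp u) \<Longrightarrow> supp u \<subseteq> KX X dX n \<Longrightarrow> u \<in> FG X dX n"
  by (auto simp: FG_def supp_def)

lemma KX_len: "b \<in> KX X dX n \<Longrightarrow> length (fst b) = n"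
  by (auto simp: KX_def in_K_def)

lemma fbul_FG:
  assumes u: "u \<in> FG X dX n" and v: "v \<in> FG X dX m" and i: "i \<le> m"
  shows "fbul i u v \<in> FG X dX (n + m)"
proof (rule FG_I)
  show "finite (supp (fbul i u v))"
    using supp_fbul[of i u v] FG_D[OF u] FG_D[OF v] by (meson finite_SigmaI finite_imageI finite_subset)
  show "supp (fbul i u v) \<subseteq> KX X dX (n + m)"
    using supp_fbul[of i u v] FG_D[OF u] FG_D[OF v] bbul_KX[OF _ _ i] by fastforce
qed

lemma if_times_sum:
  "(if P then (\<Sum>a\<in>A. \<Sum>b\<in>B. if Q a b then f a b else 0) * (z::'k::field) else 0) =
   (\<Sum>a\<in>A. \<Sum>b\<in>B. if Q a b then (if P then f a b * z else 0) else 0)"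
  by (cases P) (simp_all add: sum_distrib_right cong: if_cong, intro sum.cong refl, simp)

lemma times_if_sum:
  "(if P then (z::'k::field) * (\<Sum>a\<in>A. \<Sum>b\<in>B. if Q a b then f a b else 0) else 0) =
   (\<Sum>a\<in>A. \<Sum>b\<in>B. if Q a b then (if P then z * f a b else 0) else 0)"
  by (cases P) (simp_all add: sum_distrib_left cong: if_cong, intro sum.cong refl, simp)

lemma fbul_assoc:
  assumes x: "x \<in> FG X dX n" and y: "y \<in> FG X dX m" and z: "z \<in> FG X dX p" and i: "i \<le> m" and j: "j \<le> p"
  shows "fbul j (fbul i x y) z = fbul (i + j) x (fbul j y z)"
proof
  fix b :: "nat list \<times> 'a list"
  define Xs where "Xs = supp x"
  define Ys where "Ys = supp y"
  define Zs where "Zs = supp z"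
  define D where "D = (\<lambda>(a, c). bbul i a c) ` (Xs \<times> Ys)"
  define E where "E = (\<lambda>(a, c). bbul j a c) ` (Ys \<times> Zs)"
  have fX: "finite Xs" "Xs \<subseteq> KX X dX n" using FG_D[OF x] by (auto simp: Xs_def)
  have fY: "finite Ys" "Ys \<subseteq> KX X dX m" using FG_D[OF y] by (auto simp: Ys_def)
  have fZ: "finite Zs" "Zs \<subseteq> KX X dX p" using FG_D[OF z] by (auto simp: Zs_def)
  have fD: "finite D" "supp (fbul i x y) \<subseteq> D" using fX fY supp_fbul[of i x y] by (auto simp: D_def Xs_def Ys_def)
  have fE: "finite E" "supp (fbul j y z) \<subseteq> E" using fY fZ supp_fbul[of j y z] by (auto simp: E_def Zs_def Ys_def)
  have "fbul j (fbul i x y) z b = (\<Sum>e\<in>D. \<Sum>c\<in>Zs. if bbul j e c = b then fbul i x y e * z c else 0)"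
    using fbul_eq[OF fD(1) fZ(1) fD(2)] by (simp add: Zs_def)
  also have "\<dots> = (\<Sum>c\<in>Zs. \<Sum>e\<in>D. if bbul j e c = b then fbul i x y e * z c else 0)"
    by (rule sum.swap)
  also have "\<dots> = (\<Sum>c\<in>Zs. \<Sum>e\<in>D. \<Sum>a\<in>Xs. \<Sum>b'\<in>Ys. if bbul i a b' = e then (if bbul j e c = b then x a * y b' * z c else 0) else 0)"
    using fbul_eq[OF fX(1) fY(1), of x y i] unfolding Xs_def Ys_def by (simp only: if_times_sum order_refl)
  also have "\<dots> = (\<Sum>c\<in>Zs. \<Sum>a\<in>Xs. \<Sum>b'\<in>Ys. if bbul j (bbul i a b') c = b then x a * y b' * z c else 0)"
    by (rule sum.cong[OF refl], rule collapse2) (use fD fX fY in \<open>auto simp: D_def\<close>)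
  also have "\<dots> = (\<Sum>a\<in>Xs. \<Sum>c\<in>Zs. \<Sum>b'\<in>Ys. if bbul j (bbul i a b') c = b then x a * y b' * z c else 0)"
    by (rule sum.swap)
  also have "\<dots> = (\<Sum>a\<in>Xs. \<Sum>b'\<in>Ys. \<Sum>c\<in>Zs. if bbul j (bbul i a b') c = b then x a * y b' * z c else 0)"
    by (rule sum.cong[OF refl], rule sum.swap)
  also have "\<dots> = (\<Sum>a\<in>Xs. \<Sum>b'\<in>Ys. \<Sum>c\<in>Zs. if bbul (i + j) a (bbul j b' c) = b then x a * (y b' * z c) else 0)"
  proof (intro sum.cong refl)
    fix a b' c assume "a \<in> Xs" "b' \<in> Ys" "c \<in> Zs"
    then have "length (fst b') = m" "length (fst c) = p" using fY fZ KX_len by blast+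
    then show "(if bbul j (bbul i a b') c = b then x a * y b' * z c else 0) =
      (if bbul (i + j) a (bbul j b' c) = b then x a * (y b' * z c) else 0)"
      using bbul_assoc[of i b' j c a] i j by (simp add: mult.assoc)
  qed
  also have "\<dots> = (\<Sum>a\<in>Xs. \<Sum>e\<in>E. \<Sum>b'\<in>Ys. \<Sum>c\<in>Zs. if bbul j b' c = e then (if bbul (i + j) a e = b then x a * (y b' * z c) else 0) else 0)"
    by (rule sum.cong[OF refl], rule collapse2[symmetric]) (use fE fY fZ in \<open>auto simp: E_def\<close>)
  also have "\<dots> = (\<Sum>a\<in>Xs. \<Sum>e\<in>E. if bbul (i + j) a e = b then x a * fbul j y z e else 0)"
    using fbul_eq[OF fY(1) fZ(1), of y z j] unfolding Ys_def Zs_def by (simp only: times_if_sum order_refl)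
  also have "\<dots> = fbul (i + j) x (fbul j y z) b"
    using fbul_eq[OF fX(1) fE(1) _ fE(2)] by (simp add: Xs_def)
  finally show "fbul j (fbul i x y) z b = fbul (i + j) x (fbul j y z) b" .
qed



lemma supp_add: "supp (u + v) \<subseteq> supp u \<union> supp (v :: 'b \<Rightarrow> 'k::monoid_add)"
  by (auto simp: supp_def)

lemma supp_fscale: "supp (fscale c u) \<subseteq> supp u"
  by (auto simp: supp_def fscale_def)

lemma fbul_add_left:
  assumes "finite (supp u)" "finite (supp u')" "finite (supp v)"
  shows "fbul i (u + u') v = fbul i u v + fbul i u' v"
proof
  fix b
  let ?A = "supp u \<union> supp u'"
  have A: "finite ?A" using assms by simp
  have "fbul i (u + u') v b = (\<Sum>a\<in>?A. \<Sum>c\<in>supp v. if bbul i a c = b then (u + u') a * v c else 0)"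
    by (rule fbul_eq) (use A assms supp_add[of u u'] in auto)
  also have "\<dots> = (\<Sum>a\<in>?A. \<Sum>c\<in>supp v. if bbul i a c = b then u a * v c else 0)
     + (\<Sum>a\<in>?A. \<Sum>c\<in>supp v. if bbul i a c = b then u' a * v c else 0)"
    by (simp add: sum.distrib[symmetric] distrib_right cong: if_cong) (intro sum.cong refl, simp)
  also have "\<dots> = fbul i u v b + fbul i u' v b"
    using fbul_eq[of ?A "supp v" u v i b] fbul_eq[of ?A "supp v" u' v i b] A assms by auto
  finally show "fbul i (u + u') v b = (fbul i u v + fbul i u' v) b" by simp
qed

lemma fbul_add_right:
  assumes "finite (supp u)" "finite (supp v)" "finite (supp v')"
  shows "fbul i u (v + v') = fbul i u v + fbul i u v'"
proof
  fix b
  let ?A = "supp v \<union> supp v'"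
  have A: "finite ?A" using assms by simp
  have "fbul i u (v + v') b = (\<Sum>a\<in>supp u. \<Sum>c\<in>?A. if bbul i a c = b then u a * (v + v') c else 0)"
    by (rule fbul_eq) (use A assms supp_add[of v v'] in auto)
  also have "\<dots> = (\<Sum>a\<in>supp u. \<Sum>c\<in>?A. if bbul i a c = b then u a * v c else 0)
     + (\<Sum>a\<in>supp u. \<Sum>c\<in>?A. if bbul i a c = b then u a * v' c else 0)"
    by (simp add: sum.distrib[symmetric] distrib_left cong: if_cong) (intro sum.cong refl, simp)
  also have "\<dots> = fbul i u v b + fbul i u v' b"
    using fbul_eq[of "supp u" ?A u v i b] fbul_eq[of "supp u" ?A u v' i b] A assms by auto
  finally show "fbul i u (v + v') b = (fbul i u v + fbul i u v') b" by simp
qed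

lemma fbul_scale_left:
  assumes "finite (supp u)" "finite (supp v)"
  shows "fbul i (fscale c u) v = fscale c (fbul i u v)"
proof
  fix b
  have "fbul i (fscale c u) v b = (\<Sum>a\<in>supp u. \<Sum>c'\<in>supp v. if bbul i a c' = b then fscale c u a * v c' else 0)"
    by (rule fbul_eq) (use assms supp_fscale[of c u] in auto)
  also have "\<dots> = c * (\<Sum>a\<in>supp u. \<Sum>c'\<in>supp v. if bbul i a c' = b then u a * v c' else 0)"
    by (simp add: sum_distrib_left fscale_def cong: if_cong) (intro sum.cong refl, simp)
  also have "\<dots> = fscale c (fbul i u v) b"
    using fbul_eq[of "supp u" "supp v" u v i b] assms by (simp add: fscale_def)
  finally show "fbul i (fscale c u) v b = fscale c (fbul i u v) b" .
qed

lemma fbul_scale_right: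
  assumes "finite (supp u)" "finite (supp v)"
  shows "fbul i u (fscale c v) = fscale c (fbul i u v)"
proof
  fix b
  have "fbul i u (fscale c v) b = (\<Sum>a\<in>supp u. \<Sum>c'\<in>supp v. if bbul i a c' = b then u a * fscale c v c' else 0)"
    by (rule fbul_eq) (use assms supp_fscale[of c v] in auto)
  also have "\<dots> = c * (\<Sum>a\<in>supp u. \<Sum>c'\<in>supp v. if bbul i a c' = b then u a * v c' else 0)"
    by (simp add: sum_distrib_left fscale_def cong: if_cong) (intro sum.cong refl, simp)
  also have "\<dots> = fscale c (fbul i u v) b"
    using fbul_eq[of "supp u" "supp v" u v i b] assms by (simp add: fscale_def)
  finally show "fbul i u (fscale c v) b = fscale c (fbul i u v) b" .
qed

lemma graded_FG: "graded_vs (fscale :: 'k::field \<Rightarrow> _) (FG (X :: 'x set) dX)"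
  unfolding graded_vs_def
proof (intro conjI allI impI ballI)
  show "fscale a (x + y) = fscale a x + fscale a y" for a :: 'k and x y :: "nat list \<times> 'x list \<Rightarrow> 'k"
    by (auto simp: fscale_def distrib_left)
  show "fscale (a + b) x = fscale a x + fscale b x" for a b :: 'k and x :: "nat list \<times> 'x list \<Rightarrow> 'k"
    by (auto simp: fscale_def distrib_right)
  show "fscale a (fscale b x) = fscale (a * b) x" for a b :: 'k and x :: "nat list \<times> 'x list \<Rightarrow> 'k"
    by (auto simp: fscale_def mult.assoc)
  show "fscale 1 x = x" for x :: "nat list \<times> 'x list \<Rightarrow> 'k"
    by (auto simp: fscale_def)
  show "0 \<in> FG X dX n" for n by (auto simp: FG_def)
  show "x + y \<in> FG X dX n" if "x \<in> FG X dX n" "y \<in> FG X dX n" for n and x y :: "nat list \<times> 'x list \<Rightarrow> 'k"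
    using FG_D[OF that(1)] FG_D[OF that(2)] supp_add[of x y]
    by (intro FG_I) (auto intro: finite_subset)
  show "fscale c x \<in> FG X dX n" if "x \<in> FG X dX n" for n c and x :: "nat list \<times> 'x list \<Rightarrow> 'k"
    using FG_D[OF that] supp_fscale[of c x]
    by (intro FG_I) (auto intro: finite_subset)
next
  fix S :: "nat set" and c d :: "nat \<Rightarrow> nat list \<times> 'x list \<Rightarrow> 'k" and n
  assume H: "finite S \<and> (\<forall>n\<in>S. c n \<in> FG X dX n \<and> d n \<in> FG X dX n) \<and> sum c S = sum d S"
    and n: "n \<in> S"
  show "c n = d n"
  proof
    fix b
    show "c n b = d n b"
    proof (cases "length (fst b) = n")
      case True
      have z: "c n' b = 0 \<and> d n' b = 0" if "n' \<in> S" "n' \<noteq> n" for n'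
      proof -
        have nb: "b \<notin> KX X dX n'" using KX_len that True by blast
        have "c n' \<in> FG X dX n'" "d n' \<in> FG X dX n'" using H that by auto
        then show ?thesis using nb FG_D[of "c n'" X dX n'] FG_D[of "d n'" X dX n'] by (auto simp: supp_def)
      qed
      have "sum c S b = c n b"
        unfolding sum_fun_apply using z n H by (subst sum.remove[of S n]) (auto intro!: sum.neutral)
      moreover have "sum d S b = d n b"
        unfolding sum_fun_apply using z n H by (subst sum.remove[of S n]) (auto intro!: sum.neutral)
      ultimately show ?thesis using H by simp
    next
      case False
      then have nb: "b \<notin> KX X dX n" using KX_len by blast
      have "c n \<in> FG X dX n" "d n \<in> FG X dX n" using H n by auto
      then have "c n b = 0" "d n b = 0" using nb FG_D[of "c n" X dX n] FG_D[of "d n" X dX n] unfolding supp_def by blast+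
      then show ?thesis by simp
    qed
  qed
qed

lemma FG_fin: "u \<in> FG X dX n \<Longrightarrow> finite (supp u)"
  using FG_D by blast

lemma psa_FG: "preshuffle_algebra (fscale :: 'k::field \<Rightarrow> _) (FG X dX) fbul"
  unfolding preshuffle_algebra_def
proof (intro conjI allI impI)
  show "graded_vs (fscale :: 'k::field \<Rightarrow> _) (FG X dX)" by (rule graded_FG)
qed (auto intro: fbul_FG fbul_add_left fbul_add_right fbul_scale_left fbul_scale_right fbul_assoc FG_fin)



function PB :: "(nat \<Rightarrow> 'a \<Rightarrow> 'a \<Rightarrow> 'a) \<Rightarrow> ('x \<Rightarrow> 'a) \<Rightarrow> nat list \<times> 'x list \<Rightarrow> 'a::zero" where
  "PB bul phi (f, []) = 0"
| "PB bul phi (f, [x]) = phi x"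
| "PB bul phi (f, x # y # ys) = bul (length (takeWhile (\<lambda>v. v \<noteq> 1) f)) (phi x)
     (PB bul phi (map (\<lambda>v. v - 1) (filter (\<lambda>v. v \<noteq> 1) f), y # ys))"
  by pat_completeness auto
termination by (relation "measure (\<lambda>(_, _, (_, xs)). length xs)") auto

lemma PB_unfold:
  assumes "0 \<notin> set g" "j \<le> length g" "ys \<noteq> []" "1 \<le> d"
  shows "PB bul phi (bbul j (replicate d 1, [x]) (g, ys)) = bul j (phi x) (PB bul phi (g, ys))"
proof -
  obtain y ys' where ys: "ys = y # ys'" using assms(3) by (cases ys) auto
  obtain d' where d: "d = Suc d'" using assms(4) by (cases d) auto
  have n1: "\<forall>v\<in>set (map (\<lambda>v. v + 1) (take j g)). v \<noteq> 1"
    using assms(1) by (auto, metis in_set_takeD neq0_conv)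
  have tw: "takeWhile (\<lambda>v. v \<noteq> 1) (map (\<lambda>v. v + 1) (take j g) @ replicate d 1 @ map (\<lambda>v. v + 1) (drop j g))
      = map (\<lambda>v. v + 1) (take j g)"
  proof -
    have "takeWhile (\<lambda>v. v \<noteq> 1) (map (\<lambda>v. v + 1) (take j g) @ (replicate d 1 @ map (\<lambda>v. v + 1) (drop j g)))
      = map (\<lambda>v. v + 1) (take j g) @ takeWhile (\<lambda>v. v \<noteq> 1) (replicate d 1 @ map (\<lambda>v. v + 1) (drop j g))"
      by (rule takeWhile_append2) (use n1 in blast)
    then show ?thesis by (simp add: d)
  qed
  have fa: "filter (\<lambda>v. v \<noteq> 1) (map (\<lambda>v. v + 1) L) = map (\<lambda>v. v + 1) L" if "0 \<notin> set L" for L :: "nat list"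
    using that by (induction L) auto
  have s1: "0 \<notin> set (take j g)" "0 \<notin> set (drop j g)" using assms(1) by (auto dest: in_set_takeD in_set_dropD)
  have mm: "map (\<lambda>v. v - 1) (map (\<lambda>v. v + 1) L) = L" for L :: "nat list" by (induction L) auto
  have flt: "map (\<lambda>v. v - 1) (filter (\<lambda>v. v \<noteq> 1) (map (\<lambda>v. v + 1) (take j g) @ replicate d 1 @ map (\<lambda>v. v + 1) (drop j g))) = g"
    using fa[OF s1(1)] fa[OF s1(2)] mm by simp
  show ?thesis using tw flt assms(2)
    by (simp add: bbul_simp ys del: PB.simps(3)) (simp only: PB.simps(3), simp)
qed

lemma KX_props: "b \<in> KX X dX n \<Longrightarrow> length (fst b) = n \<and> 0 \<notin> set (fst b) \<and> snd b \<noteq> [] \<and> 1 \<le> n"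
  by (cases b) (auto simp: KX_def in_K_def)

lemma gen_KX: "x \<in> X \<Longrightarrow> 1 \<le> dX x \<Longrightarrow> (replicate (dX x) 1, [x]) \<in> KX X dX (dX x)"
  by (auto simp: KX_def in_K_def filter_replicate)

locale psa =
  fixes scale :: "'k::field \<Rightarrow> 'a::ab_group_add \<Rightarrow> 'a" and G :: "nat \<Rightarrow> 'a set"
    and bul :: "nat \<Rightarrow> 'a \<Rightarrow> 'a \<Rightarrow> 'a"
  assumes psa: "preshuffle_algebra scale G bul"
begin

lemma sc_add: "scale a (x + y) = scale a x + scale a y"
  using psa by (simp add: preshuffle_algebra_def graded_vs_def)
lemma sc_add2: "scale (a + b) x = scale a x + scale b x"
  using psa by (simp add: preshuffle_algebra_def graded_vs_def)
lemma sc_mult: "scale a (scale b x) = scale (a * b) x"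
  using psa by (simp add: preshuffle_algebra_def graded_vs_def)
lemma sc_1: "scale 1 x = x"
  using psa by (simp add: preshuffle_algebra_def graded_vs_def)
lemma G0: "0 \<in> G n"
  using psa by (simp add: preshuffle_algebra_def graded_vs_def)
lemma G_add: "x \<in> G n \<Longrightarrow> y \<in> G n \<Longrightarrow> x + y \<in> G n"
  using psa by (simp add: preshuffle_algebra_def graded_vs_def)
lemma G_scale: "x \<in> G n \<Longrightarrow> scale c x \<in> G n"
  using psa by (simp add: preshuffle_algebra_def graded_vs_def)
lemma bul_G: "x \<in> G n \<Longrightarrow> y \<in> G m \<Longrightarrow> i \<le> m \<Longrightarrow> bul i x y \<in> G (n + m)"
  using psa by (simp add: preshuffle_algebra_def)
lemma bul_addL: "x \<in> G n \<Longrightarrow> x' \<in> G n \<Longrightarrow> y \<in> G m \<Longrightarrow> i \<le> m \<Longrightarrow> bul i (x + x') y = bul i x y + bul i x' y"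
  using psa by (simp add: preshuffle_algebra_def)
lemma bul_addR: "x \<in> G n \<Longrightarrow> y \<in> G m \<Longrightarrow> y' \<in> G m \<Longrightarrow> i \<le> m \<Longrightarrow> bul i x (y + y') = bul i x y + bul i x y'"
  using psa by (simp add: preshuffle_algebra_def)
lemma bul_scL: "x \<in> G n \<Longrightarrow> y \<in> G m \<Longrightarrow> i \<le> m \<Longrightarrow> bul i (scale c x) y = scale c (bul i x y)"
  using psa by (simp add: preshuffle_algebra_def)
lemma bul_scR: "x \<in> G n \<Longrightarrow> y \<in> G m \<Longrightarrow> i \<le> m \<Longrightarrow> bul i x (scale c y) = scale c (bul i x y)"
  using psa by (simp add: preshuffle_algebra_def)
lemma bul_assoc: "x \<in> G n \<Longrightarrow> y \<in> G m \<Longrightarrow> z \<in> G p \<Longrightarrow> i \<le> m \<Longrightarrow> j \<le> p \<Longrightarrow>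
    bul j (bul i x y) z = bul (i + j) x (bul j y z)"
  using psa unfolding preshuffle_algebra_def by blast

lemma sc_0: "scale 0 x = 0"
proof -
  have "scale 0 x + scale 0 x = scale 0 x + 0" using sc_add2[of 0 0 x] by simp
  then show ?thesis by simp
qed

lemma sc_z: "scale c 0 = 0"
proof -
  have "scale c 0 + scale c 0 = scale c 0 + 0" using sc_add[of c 0 0] by simp
  then show ?thesis by simp
qed

lemma sc_if: "scale (if P then t else 0) y = (if P then scale t y else 0)"
  by (simp add: sc_0)

lemma sc_sumL: "scale (\<Sum>i\<in>A. f i) x = (\<Sum>i\<in>A. scale (f i) x)"
  by (induction A rule: infinite_finite_induct) (auto simp: sc_0 sc_add2)

lemma sc_sumR: "scale c (\<Sum>i\<in>A. f i) = (\<Sum>i\<in>A. scale c (f i))"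
  by (induction A rule: infinite_finite_induct) (auto simp: sc_z sc_add)

lemma G_sum: "(\<And>i. i \<in> A \<Longrightarrow> f i \<in> G n) \<Longrightarrow> (\<Sum>i\<in>A. f i) \<in> G n"
  by (induction A rule: infinite_finite_induct) (auto simp: G0 G_add)

lemma bul_0L: "y \<in> G m \<Longrightarrow> i \<le> m \<Longrightarrow> bul i 0 y = 0"
proof -
  assume a: "y \<in> G m" "i \<le> m"
  have "bul i 0 y + bul i 0 y = bul i 0 y + 0" using bul_addL[OF G0 G0 a] by simp
  then show ?thesis by simp
qed

lemma bul_0R: "x \<in> G n \<Longrightarrow> i \<le> m \<Longrightarrow> bul i x 0 = 0"
proof -
  assume a: "x \<in> G n" "i \<le> m"
  have "bul i x 0 + bul i x 0 = bul i x 0 + 0" using bul_addR[OF a(1) G0 G0 a(2)] by simp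
  then show ?thesis by simp
qed

lemma bul_sumL: "(\<And>a. a \<in> A \<Longrightarrow> f a \<in> G n) \<Longrightarrow> y \<in> G m \<Longrightarrow> i \<le> m \<Longrightarrow>
    bul i (\<Sum>a\<in>A. f a) y = (\<Sum>a\<in>A. bul i (f a) y)"
proof (induction A rule: infinite_finite_induct)
  case (infinite A) then show ?case by (simp add: bul_0L)
next
  case empty then show ?case by (simp add: bul_0L)
next
  case (insert a A)
  have fa: "f a \<in> G n" using insert by auto
  have fs: "sum f A \<in> G n" using insert by (intro G_sum) auto
  show ?case using insert bul_addL[OF fa fs \<open>y \<in> G m\<close> \<open>i \<le> m\<close>] by simp
qed

lemma bul_sumR: "(\<And>a. a \<in> A \<Longrightarrow> f a \<in> G m) \<Longrightarrow> x \<in> G n \<Longrightarrow> i \<le> m \<Longrightarrow>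
    bul i x (\<Sum>a\<in>A. f a) = (\<Sum>a\<in>A. bul i x (f a))"
proof (induction A rule: infinite_finite_induct)
  case (infinite A) then show ?case by (simp add: bul_0R)
next
  case empty then show ?case by (simp add: bul_0R)
next
  case (insert a A)
  have fa: "f a \<in> G m" using insert by auto
  have fs: "sum f A \<in> G m" using insert by (intro G_sum) auto
  show ?case using insert bul_addR[OF \<open>x \<in> G n\<close> fa fs \<open>i \<le> m\<close>] by simp
qed

end




lemma gcarrier_iff:
  "u \<in> gcarrier (FG X dX) \<longleftrightarrow> finite (supp u) \<and> (\<forall>b\<in>supp u. b \<in> KX X dX (length (fst b)))"
proof
  assume "u \<in> gcarrier (FG X dX)"
  then obtain S c where u: "u = (\<Sum>n\<in>S. c n)" and S: "finite S" and c: "\<forall>n\<in>S. c n \<in> FG X dX n"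
    by (auto simp: gcarrier_def)
  have sub: "supp u \<subseteq> (\<Union>n\<in>S. supp (c n))"
  proof
    fix b assume "b \<in> supp u"
    then have "(\<Sum>n\<in>S. c n b) \<noteq> 0" by (simp add: supp_def u sum_fun_apply)
    then obtain n where "n \<in> S" "c n b \<noteq> 0" by (meson sum.neutral)
    then show "b \<in> (\<Union>n\<in>S. supp (c n))" by (auto simp: supp_def)
  qed
  have "finite (\<Union>n\<in>S. supp (c n))" using S c FG_D by blast
  then have "finite (supp u)" using sub finite_subset by blast
  moreover have "\<forall>b\<in>supp u. b \<in> KX X dX (length (fst b))"
  proof
    fix b assume "b \<in> supp u"
    then obtain n where n: "n \<in> S" "b \<in> supp (c n)" using sub by blast
    then have "b \<in> KX X dX n" using c FG_D by blast
    then show "b \<in> KX X dX (length (fst b))" using KX_len by metis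
  qed
  ultimately show "finite (supp u) \<and> (\<forall>b\<in>supp u. b \<in> KX X dX (length (fst b)))" ..
next
  assume H: "finite (supp u) \<and> (\<forall>b\<in>supp u. b \<in> KX X dX (length (fst b)))"
  define S where "S = (\<lambda>b. length (fst b)) ` supp u"
  define c where "c n = (\<lambda>b. if length (fst b) = n then u b else 0)" for n
  have S: "finite S" using H by (simp add: S_def)
  have c: "\<forall>n\<in>S. c n \<in> FG X dX n"
  proof
    fix n assume "n \<in> S"
    have "supp (c n) \<subseteq> supp u" by (auto simp: supp_def c_def)
    moreover have "supp (c n) \<subseteq> KX X dX n" using H by (auto simp: supp_def c_def)
    ultimately show "c n \<in> FG X dX n" using H by (intro FG_I) (auto intro: finite_subset)
  qed
  have "u = (\<Sum>n\<in>S. c n)"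
  proof
    fix b
    have "(\<Sum>n\<in>S. c n) b = (\<Sum>n\<in>S. if length (fst b) = n then u b else 0)"
      by (simp add: sum_fun_apply c_def)
    also have "\<dots> = (if length (fst b) \<in> S then u b else 0)"
      using S by (simp add: sum.delta)
    also have "\<dots> = u b" by (auto simp: S_def supp_def)
    finally show "u b = (\<Sum>n\<in>S. c n) b" by simp
  qed
  then show "u \<in> gcarrier (FG X dX)" unfolding gcarrier_def using S c by blast
qed

definition delta :: "'b \<Rightarrow> 'b \<Rightarrow> 'k::field" where "delta b = (\<lambda>b'. if b' = b then 1 else 0)"

lemma supp_delta: "supp (delta b :: _ \<Rightarrow> 'k::field) = {b}"
  by (auto simp: supp_def delta_def)

lemma delta_FG: "b \<in> KX X dX n \<Longrightarrow> (delta b :: _ \<Rightarrow> 'k::field) \<in> FG X dX n"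
  by (rule FG_I) (auto simp: supp_delta)

lemma fbul_delta: "fbul i (delta a) (delta c) = (delta (bbul i a c) :: _ \<Rightarrow> 'k::field)"
proof
  fix b
  have "{(a', c'). (delta a a' :: 'k) \<noteq> 0 \<and> (delta c c' :: 'k) \<noteq> 0 \<and> bbul i a' c' = b} =
        (if bbul i a c = b then {(a, c)} else {})"
    by (auto simp: delta_def)
  then show "fbul i (delta a) (delta c) b = (delta (bbul i a c) :: _ \<Rightarrow> 'k) b"
    by (simp add: fbul_def delta_def)
qed

lemma gen_delta: "gen dX x = delta (replicate (dX x) 1, [x])"
  by (simp add: gen_def delta_def fun_eq_iff)

lemma partial_sum_delta:
  "finite A \<Longrightarrow> (\<Sum>b\<in>A. fscale (u b) (delta b)) = (\<lambda>b'. if b' \<in> A then u b' else (0::'k::field))"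
proof (rule ext)
  fix b' assume A: "finite A"
  have "(\<Sum>b\<in>A. fscale (u b) (delta b)) b' = (\<Sum>b\<in>A. if b' = b then u b else 0)"
    unfolding sum_fun_apply by (rule sum.cong) (auto simp: fscale_def delta_def)
  also have "\<dots> = (if b' \<in> A then u b' else 0)" using A by (simp add: sum.delta)
  finally show "(\<Sum>b\<in>A. fscale (u b) (delta b)) b' = (if b' \<in> A then u b' else 0)" .
qed

definition PhiF :: "('k::field \<Rightarrow> 'a \<Rightarrow> 'a) \<Rightarrow> (nat \<Rightarrow> 'a \<Rightarrow> 'a \<Rightarrow> 'a) \<Rightarrow> ('x \<Rightarrow> 'a)
    \<Rightarrow> (nat list \<times> 'x list \<Rightarrow> 'k) \<Rightarrow> 'a::ab_group_add" where
  "PhiF scale bul phi u = (\<Sum>b\<in>supp u. scale (u b) (PB bul phi b))"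

context psa
begin

lemma PB_G:
  assumes "b \<in> KX X dX n" and phiG: "\<forall>x\<in>X. phi x \<in> G (dX x)"
  shows "PB bul phi b \<in> G n"
  using assms(1)
proof (induction "length (snd b)" arbitrary: b n rule: less_induct)
  case less
  obtain f xs where b: "b = (f, xs)" by (cases b)
  obtain x xs' where xs: "xs = x # xs'" using KX_props[OF less.prems] b by (cases xs) auto
  show ?case
  proof (cases "xs' = []")
    case True
    then have "f = replicate n 1 \<and> dX x = n \<and> x \<in> X" using KX_single[of f x X dX n] less.prems b xs True by simp
    then have xX: "x \<in> X" "dX x = n" by auto
    have "phi x \<in> G (dX x)" using phiG xX by blast
    then show ?thesis using xX True by (simp add: b xs)
  next
    case False
    obtain j f' where dec: "(f, x#xs') = bbul j (replicate (dX x) 1, [x]) (f', xs')"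
      "(f', xs') \<in> KX X dX (n - dX x)" "j \<le> n - dX x" "x \<in> X" "1 \<le> dX x" "dX x \<le> n"
      using KX_decomp[OF _ False, of f x X dX n] less.prems b xs by blast
    have IH: "PB bul phi (f', xs') \<in> G (n - dX x)"
      using less.hyps[OF _ dec(2)] b xs by simp
    have p: "0 \<notin> set f'" "length f' = n - dX x" using KX_props[OF dec(2)] by auto
    have "PB bul phi b = bul j (phi x) (PB bul phi (f', xs'))"
      using PB_unfold[OF p(1) _ False dec(5), of j bul phi x] dec p b xs by simp
    also have "\<dots> \<in> G (dX x + (n - dX x))"
      by (rule bul_G) (use phiG dec IH in auto)
    finally show ?thesis using dec by simp
  qed
qed


lemma PB_hom:
  assumes "a \<in> KX X dX n" "c \<in> KX X dX m" "i \<le> m" and phiG: "\<forall>x\<in>X. phi x \<in> G (dX x)"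
  shows "PB bul phi (bbul i a c) = bul i (PB bul phi a) (PB bul phi c)"
  using assms(1)
proof (induction "length (snd a)" arbitrary: a n rule: less_induct)
  case less
  obtain f xs where a: "a = (f, xs)" by (cases a)
  obtain x xs' where xs: "xs = x # xs'" using KX_props[OF less.prems] a by (cases xs) auto
  obtain g ys where c: "c = (g, ys)" by (cases c)
  have pc: "length g = m" "0 \<notin> set g" "ys \<noteq> []" using KX_props[OF assms(2)] c by auto
  show ?case
  proof (cases "xs' = []")
    case True
    then have fx: "f = replicate n 1 \<and> dX x = n \<and> x \<in> X" using KX_single[of f x X dX n] less.prems a xs True by simp
    have n1: "1 \<le> n" using KX_props[OF less.prems] by simp
    show ?thesis
      using PB_unfold[OF pc(2) _ pc(3) n1, of i bul phi x] assms(3) pc fx True by (simp add: a xs c)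
  next
    case False
    obtain j f' where dec: "(f, x#xs') = bbul j (replicate (dX x) 1, [x]) (f', xs')"
      "(f', xs') \<in> KX X dX (n - dX x)" "j \<le> n - dX x" "x \<in> X" "1 \<le> dX x" "dX x \<le> n"
      using KX_decomp[OF _ False, of f x X dX n] less.prems a xs by blast
    have p: "0 \<notin> set f'" "length f' = n - dX x" using KX_props[OF dec(2)] by auto
    define a' where "a' = (f', xs')"
    define g1 where "g1 = (replicate (dX x) (1::nat), [x])"
    have IH: "PB bul phi (bbul i a' c) = bul i (PB bul phi a') (PB bul phi c)"
      using less.hyps[OF _ dec(2)] a xs by (simp add: a'_def)
    have ac: "bbul i a' c \<in> KX X dX (n - dX x + m)" using bbul_KX[OF dec(2) assms(2) assms(3)] by (simp add: a'_def)
    obtain h zs where hz: "bbul i a' c = (h, zs)" by (cases "bbul i a' c")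
    have ph: "0 \<notin> set h" "length h = n - dX x + m" "zs \<noteq> []" using KX_props[OF ac] hz by auto
    have "bbul i a c = bbul i (bbul j g1 a') c" using dec a xs by (simp add: a'_def g1_def)
    also have "\<dots> = bbul (j + i) g1 (bbul i a' c)"
      by (rule bbul_assoc) (use p dec pc assms(3) c in \<open>auto simp: a'_def\<close>)
    finally have e1: "bbul i a c = bbul (j + i) g1 (h, zs)" using hz by simp
    have Ga': "PB bul phi a' \<in> G (n - dX x)" using PB_G[OF dec(2) phiG] by (simp add: a'_def)
    have Gc: "PB bul phi c \<in> G m" using PB_G[OF assms(2) phiG] .
    have Gx: "phi x \<in> G (dX x)" using phiG dec by auto
    have "PB bul phi (bbul i a c) = bul (j + i) (phi x) (PB bul phi (h, zs))"
      using e1 PB_unfold[OF ph(1) _ ph(3) dec(5), of "j + i" bul phi x] ph dec(3) assms(3)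
      by (simp add: g1_def)
    also have "\<dots> = bul (j + i) (phi x) (bul i (PB bul phi a') (PB bul phi c))"
      using IH hz by simp
    also have "\<dots> = bul i (bul j (phi x) (PB bul phi a')) (PB bul phi c)"
      using bul_assoc[OF Gx Ga' Gc dec(3) assms(3)] by simp
    also have "bul j (phi x) (PB bul phi a') = PB bul phi a"
      using PB_unfold[OF p(1) _ False dec(5), of j bul phi x] dec p a xs by (simp add: a'_def)
    finally show ?thesis .
  qed
qed


lemma Phi_sup: "finite A \<Longrightarrow> supp u \<subseteq> A \<Longrightarrow> PhiF scale bul phi u = (\<Sum>b\<in>A. scale (u b) (PB bul phi b))"
  unfolding PhiF_def by (rule sum.mono_neutral_left) (auto simp: supp_def sc_0)

lemma PhiF_free_hom:
  fixes X :: "'x set" and phi :: "'x \<Rightarrow> 'a"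
  assumes phiG: "\<forall>x\<in>X. phi x \<in> G (dX x)"
  shows "free_hom X dX scale G bul phi (PhiF scale bul phi)"
  unfolding free_hom_def
proof (intro conjI allI ballI impI)
  fix n and u :: "nat list \<times> 'x list \<Rightarrow> 'k" assume u: "u \<in> FG X dX n"
  show "PhiF scale bul phi u \<in> G n"
    unfolding PhiF_def using FG_D[OF u] by (intro G_sum G_scale PB_G[OF _ phiG]) auto
next
  fix u v :: "nat list \<times> 'x list \<Rightarrow> 'k" assume u: "u \<in> gcarrier (FG X dX)" and v: "v \<in> gcarrier (FG X dX)"
  let ?A = "supp u \<union> supp v"
  have f: "finite ?A" using u v by (simp add: gcarrier_iff)
  have "PhiF scale bul phi (u + v) = (\<Sum>b\<in>?A. scale ((u + v) b) (PB bul phi b))"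
    by (rule Phi_sup[OF f]) (auto simp: supp_def)
  also have "\<dots> = (\<Sum>b\<in>?A. scale (u b) (PB bul phi b)) + (\<Sum>b\<in>?A. scale (v b) (PB bul phi b))"
    by (simp add: sc_add2 sum.distrib)
  also have "\<dots> = PhiF scale bul phi u + PhiF scale bul phi v"
    using Phi_sup[OF f, of u] Phi_sup[OF f, of v] by auto
  finally show "PhiF scale bul phi (u + v) = PhiF scale bul phi u + PhiF scale bul phi v" .
next
  fix c and u :: "nat list \<times> 'x list \<Rightarrow> 'k" assume u: "u \<in> gcarrier (FG X dX)"
  have f: "finite (supp u)" using u by (simp add: gcarrier_iff)
  have "PhiF scale bul phi (fscale c u) = (\<Sum>b\<in>supp u. scale (fscale c u b) (PB bul phi b))"
    by (rule Phi_sup[OF f]) (rule supp_fscale)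
  also have "\<dots> = scale c (PhiF scale bul phi u)"
    by (simp add: PhiF_def sc_sumR sc_mult fscale_def)
  finally show "PhiF scale bul phi (fscale c u) = scale c (PhiF scale bul phi u)" .
next
  fix n m i and u v :: "nat list \<times> 'x list \<Rightarrow> 'k" assume u: "u \<in> FG X dX n" and v: "v \<in> FG X dX m" and i: "i \<le> m"
  define Us where "Us = supp u"
  define Vs where "Vs = supp v"
  define D where "D = (\<lambda>(a, c). bbul i a c) ` (Us \<times> Vs)"
  have fU: "finite Us" "Us \<subseteq> KX X dX n" using FG_D[OF u] by (auto simp: Us_def)
  have fV: "finite Vs" "Vs \<subseteq> KX X dX m" using FG_D[OF v] by (auto simp: Vs_def)
  have fD: "finite D" "supp (fbul i u v) \<subseteq> D" using fU fV supp_fbul[of i u v] by (auto simp: D_def Us_def Vs_def)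
  have PU: "PB bul phi a \<in> G n" if "a \<in> Us" for a using PB_G[OF _ phiG] fU that by blast
  have PV: "PB bul phi c \<in> G m" if "c \<in> Vs" for c using PB_G[OF _ phiG] fV that by blast
  have "PhiF scale bul phi (fbul i u v) = (\<Sum>e\<in>D. scale (fbul i u v e) (PB bul phi e))"
    by (rule Phi_sup[OF fD])
  also have "\<dots> = (\<Sum>e\<in>D. \<Sum>a\<in>Us. \<Sum>c\<in>Vs. if bbul i a c = e then scale (u a * v c) (PB bul phi e) else 0)"
    using fbul_eq[OF fU(1) fV(1), of u v i] by (simp add: Us_def Vs_def sc_sumL sc_if)
  also have "\<dots> = (\<Sum>a\<in>Us. \<Sum>c\<in>Vs. scale (u a * v c) (PB bul phi (bbul i a c)))"
    by (rule collapse2) (use fD fU fV in \<open>auto simp: D_def\<close>)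
  also have "\<dots> = (\<Sum>a\<in>Us. \<Sum>c\<in>Vs. bul i (scale (u a) (PB bul phi a)) (scale (v c) (PB bul phi c)))"
  proof (intro sum.cong refl)
    fix a c assume a: "a \<in> Us" and c: "c \<in> Vs"
    have "PB bul phi (bbul i a c) = bul i (PB bul phi a) (PB bul phi c)"
      using PB_hom[OF _ _ i phiG] a c fU fV by blast
    moreover have "bul i (scale (u a) (PB bul phi a)) (scale (v c) (PB bul phi c)) =
        scale (u a * v c) (bul i (PB bul phi a) (PB bul phi c))"
      using bul_scL[OF PU[OF a] G_scale[OF PV[OF c]] i] bul_scR[OF PU[OF a] PV[OF c] i]
      by (simp add: sc_mult)
    ultimately show "scale (u a * v c) (PB bul phi (bbul i a c)) =
        bul i (scale (u a) (PB bul phi a)) (scale (v c) (PB bul phi c))" by simp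
  qed
  also have "\<dots> = (\<Sum>a\<in>Us. bul i (scale (u a) (PB bul phi a)) (\<Sum>c\<in>Vs. scale (v c) (PB bul phi c)))"
  proof (intro sum.cong refl)
    fix a assume a: "a \<in> Us"
    show "(\<Sum>c\<in>Vs. bul i (scale (u a) (PB bul phi a)) (scale (v c) (PB bul phi c))) =
        bul i (scale (u a) (PB bul phi a)) (\<Sum>c\<in>Vs. scale (v c) (PB bul phi c))"
      using bul_sumR[of Vs "\<lambda>c. scale (v c) (PB bul phi c)" m "scale (u a) (PB bul phi a)" n i]
        G_scale[OF PV] G_scale[OF PU[OF a]] i by simp
  qed
  also have "\<dots> = bul i (\<Sum>a\<in>Us. scale (u a) (PB bul phi a)) (\<Sum>c\<in>Vs. scale (v c) (PB bul phi c))"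
    using bul_sumL[of Us "\<lambda>a. scale (u a) (PB bul phi a)" n "\<Sum>c\<in>Vs. scale (v c) (PB bul phi c)" m i]
      G_scale[OF PU] G_sum[of Vs "\<lambda>c. scale (v c) (PB bul phi c)" m] G_scale[OF PV] i by simp
  also have "\<dots> = bul i (PhiF scale bul phi u) (PhiF scale bul phi v)"
    by (simp add: PhiF_def Us_def Vs_def)
  finally show "PhiF scale bul phi (fbul i u v) = bul i (PhiF scale bul phi u) (PhiF scale bul phi v)" .
next
  fix x assume "x \<in> X"
  show "PhiF scale bul phi (gen dX x) = phi x"
    unfolding PhiF_def gen_delta supp_delta by (simp add: delta_def sc_1)
qed


lemma free_hom_delta:
  fixes X :: "'x set" and phi :: "'x \<Rightarrow> 'a" and Phi :: "(nat list \<times> 'x list \<Rightarrow> 'k) \<Rightarrow> 'a"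
  assumes fh: "free_hom X dX scale G bul phi Phi" and b: "b \<in> KX X dX n"
  shows "Phi (delta b) = PB bul phi b"
  using b
proof (induction "length (snd b)" arbitrary: b n rule: less_induct)
  case less
  have hom: "\<And>n m i u v. u \<in> FG X dX n \<Longrightarrow> v \<in> FG X dX m \<Longrightarrow> i \<le> m \<Longrightarrow>
      Phi (fbul i u v) = bul i (Phi u) (Phi v)" using fh unfolding free_hom_def by blast
  have gen: "\<And>x. x \<in> X \<Longrightarrow> Phi (gen dX x) = phi x" using fh unfolding free_hom_def by blast
  obtain f xs where b: "b = (f, xs)" by (cases b)
  obtain x xs' where xs: "xs = x # xs'" using KX_props[OF less.prems] b by (cases xs) auto
  show ?case
  proof (cases "xs' = []")
    case True
    then have "f = replicate n 1 \<and> dX x = n \<and> x \<in> X" using KX_single[of f x X dX n] less.prems b xs True by simp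
    then have xX: "x \<in> X" "dX x = n" "f = replicate (dX x) 1" by auto
    have "(delta b :: _ \<Rightarrow> 'k) = gen dX x" using xX True by (simp add: b xs gen_delta)
    then show ?thesis using gen[OF xX(1)] True by (simp add: b xs)
  next
    case False
    obtain j f' where dec: "(f, x#xs') = bbul j (replicate (dX x) 1, [x]) (f', xs')"
      "(f', xs') \<in> KX X dX (n - dX x)" "j \<le> n - dX x" "x \<in> X" "1 \<le> dX x" "dX x \<le> n"
      using KX_decomp[OF _ False, of f x X dX n] less.prems b xs by blast
    have IH: "Phi (delta (f', xs')) = PB bul phi (f', xs')"
      using less.hyps[OF _ dec(2)] b xs by simp
    have p: "0 \<notin> set f'" "length f' = n - dX x" using KX_props[OF dec(2)] by auto
    have g1: "(delta (replicate (dX x) 1, [x]) :: _ \<Rightarrow> 'k) \<in> FG X dX (dX x)"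
      using delta_FG[OF gen_KX[of x X dX, OF dec(4) dec(5)]] .
    have a1: "(delta (f', xs') :: _ \<Rightarrow> 'k) \<in> FG X dX (n - dX x)" using delta_FG[OF dec(2)] .
    have "Phi (delta b) = Phi (fbul j (delta (replicate (dX x) 1, [x])) (delta (f', xs')))"
      using dec(1) b xs by (simp add: fbul_delta)
    also have "\<dots> = bul j (Phi (delta (replicate (dX x) 1, [x]))) (Phi (delta (f', xs')))"
      by (rule hom[OF g1 a1 dec(3)])
    also have "\<dots> = bul j (phi x) (PB bul phi (f', xs'))"
      using gen[OF dec(4)] IH by (simp add: gen_delta)
    also have "\<dots> = PB bul phi b"
      using PB_unfold[OF p(1) _ False dec(5), of j bul phi x] dec p b xs by simp
    finally show ?thesis .
  qed
qed

lemma free_hom_unique: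
  fixes X :: "'x set" and phi :: "'x \<Rightarrow> 'a" and Phi :: "(nat list \<times> 'x list \<Rightarrow> 'k) \<Rightarrow> 'a"
  assumes fh: "free_hom X dX scale G bul phi Phi" and u: "u \<in> gcarrier (FG X dX)"
  shows "Phi u = PhiF scale bul phi u"
proof -
  have add: "\<And>u v. u \<in> gcarrier (FG X dX) \<Longrightarrow> v \<in> gcarrier (FG X dX) \<Longrightarrow> Phi (u + v) = Phi u + Phi v"
    using fh unfolding free_hom_def by blast
  have sc: "\<And>c u. u \<in> gcarrier (FG X dX) \<Longrightarrow> Phi (fscale c u) = scale c (Phi u)"
    using fh unfolding free_hom_def by blast
  have gsub: "w \<in> gcarrier (FG X dX)" if "finite (supp w)" "supp w \<subseteq> supp u" for w :: "nat list \<times> 'x list \<Rightarrow> 'k"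
    using u that unfolding gcarrier_iff by blast
  have fu: "finite (supp u)" using u gcarrier_iff by blast
  have z: "(0 :: nat list \<times> 'x list \<Rightarrow> 'k) \<in> gcarrier (FG X dX)" by (rule gsub) (auto simp: supp_def)
  have Phi0: "Phi 0 = 0"
  proof -
    have "Phi 0 + Phi 0 = Phi 0 + 0" using add[OF z z] by simp
    then show ?thesis by simp
  qed
  have main: "A \<subseteq> supp u \<Longrightarrow> Phi (\<Sum>b\<in>A. fscale (u b) (delta b)) = (\<Sum>b\<in>A. scale (u b) (Phi (delta b)))"
    if "finite A" for A
    using that
  proof (induction A rule: finite_induct)
    case empty show ?case by (simp only: sum.empty Phi0)
  next
    case (insert a A)
    have fA: "finite A" "A \<subseteq> supp u" "a \<in> supp u" using insert by auto
    have d: "(delta a :: _ \<Rightarrow> 'k) \<in> gcarrier (FG X dX)" by (rule gsub) (use fA in \<open>auto simp: supp_delta\<close>)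
    have t: "fscale (u a) (delta a) \<in> gcarrier (FG X dX)"
      by (rule gsub) (use fA supp_fscale[of "u a" "delta a"] in \<open>auto simp: supp_delta intro: finite_subset\<close>)
    have r: "(\<Sum>b\<in>A. fscale (u b) (delta b)) \<in> gcarrier (FG X dX)"
      by (rule gsub) (use fA in \<open>auto simp: partial_sum_delta supp_def\<close>)
    have "Phi (\<Sum>b\<in>insert a A. fscale (u b) (delta b)) = Phi (fscale (u a) (delta a) + (\<Sum>b\<in>A. fscale (u b) (delta b)))"
      by (simp only: sum.insert[OF fA(1) insert(2)])
    also have "\<dots> = Phi (fscale (u a) (delta a)) + Phi (\<Sum>b\<in>A. fscale (u b) (delta b))"
      by (rule add[OF t r])
    also have "\<dots> = scale (u a) (Phi (delta a)) + (\<Sum>b\<in>A. scale (u b) (Phi (delta b)))"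
      by (simp only: sc[OF d] insert.IH[OF fA(2)])
    also have "\<dots> = (\<Sum>b\<in>insert a A. scale (u b) (Phi (delta b)))"
      by (simp only: sum.insert[OF fA(1) insert(2)])
    finally show ?case .
  qed
  have "u = (\<Sum>b\<in>supp u. fscale (u b) (delta b))"
    using fu by (simp add: partial_sum_delta supp_def fun_eq_iff)
  then have "Phi u = (\<Sum>b\<in>supp u. scale (u b) (Phi (delta b)))"
    using main[OF fu] by simp
  also have "\<dots> = (\<Sum>b\<in>supp u. scale (u b) (PB bul phi b))"
  proof (intro sum.cong refl)
    fix b assume "b \<in> supp u"
    then have "b \<in> KX X dX (length (fst b))" using u gcarrier_iff by blast
    then show "scale (u b) (Phi (delta b)) = scale (u b) (PB bul phi b)"
      using free_hom_delta[OF fh] by simp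
  qed
  finally show ?thesis by (simp add: PhiF_def)
qed

end


theorem mainTheorem15:
  fixes X :: "'x set" and dX :: "'x \<Rightarrow> nat"
  assumes pos: "\<forall>x\<in>X. 1 \<le> dX x"
  shows "preshuffle_algebra (fscale :: 'k::field \<Rightarrow> _) (FG X dX) fbul \<and>
    (\<forall>(scale :: 'k \<Rightarrow> 'a::ab_group_add \<Rightarrow> 'a) G bul (phi :: 'x \<Rightarrow> 'a).
       preshuffle_algebra scale G bul \<longrightarrow> (\<forall>x\<in>X. phi x \<in> G (dX x)) \<longrightarrow>
       (\<exists>Phi. free_hom X dX scale G bul phi Phi) \<and>
       (\<forall>Phi Psi. free_hom X dX scale G bul phi Phi \<longrightarrow> free_hom X dX scale G bul phi Psi \<longrightarrow>
          (\<forall>u\<in>gcarrier (FG X dX). Phi u = Psi u)))"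
proof (rule conjI)
  show "preshuffle_algebra (fscale :: 'k::field \<Rightarrow> _) (FG X dX) fbul" by (rule psa_FG)
next
  show "\<forall>(scale :: 'k \<Rightarrow> 'a::ab_group_add \<Rightarrow> 'a) G bul (phi :: 'x \<Rightarrow> 'a).
       preshuffle_algebra scale G bul \<longrightarrow> (\<forall>x\<in>X. phi x \<in> G (dX x)) \<longrightarrow>
       (\<exists>Phi. free_hom X dX scale G bul phi Phi) \<and>
       (\<forall>Phi Psi. free_hom X dX scale G bul phi Phi \<longrightarrow> free_hom X dX scale G bul phi Psi \<longrightarrow>
          (\<forall>u\<in>gcarrier (FG X dX). Phi u = Psi u))"
  proof (intro allI impI)
    fix scale :: "'k \<Rightarrow> 'a::ab_group_add \<Rightarrow> 'a" and G bul and phi :: "'x \<Rightarrow> 'a"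
    assume A: "preshuffle_algebra scale G bul" and P: "\<forall>x\<in>X. phi x \<in> G (dX x)"
    interpret psa scale G bul by (rule psa.intro[OF A])
    show "(\<exists>Phi. free_hom X dX scale G bul phi Phi) \<and>
       (\<forall>Phi Psi. free_hom X dX scale G bul phi Phi \<longrightarrow> free_hom X dX scale G bul phi Psi \<longrightarrow>
          (\<forall>u\<in>gcarrier (FG X dX). Phi u = Psi u))"
    proof
      show "\<exists>Phi. free_hom X dX scale G bul phi Phi" using PhiF_free_hom[OF P] by blast
      show "\<forall>Phi Psi. free_hom X dX scale G bul phi Phi \<longrightarrow> free_hom X dX scale G bul phi Psi \<longrightarrow>
          (\<forall>u\<in>gcarrier (FG X dX). Phi u = Psi u)"
        using free_hom_unique by metis
    qed
  qed
qed

end
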